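(* Let $\nu\in\mathbb M$ and $\theta_k=\theta_k[\nu]$. Then for all $k\ge0$, $$\mathbb S^{2^k}\theta_k=\theta_k,\qquad \theta_k=\tfrac12\bigl(\theta_{k+1}+\mathbb S^{2^k}\theta_{k+1}\bigr),$$ and the sequence $(\theta_k[\nu])_{k\ge0}$ uniquely determines the whole family $\mathcal P_{r,k}[\nu]$ and the measure $\nu$. Conversely, if a sequence $(\theta_k)_{k\ge0}$ of Borel probability measures on $I^{\mathbb Z}$ satisfies these two relations for all $k\ge0$, then there is a unique $\nu\in\mathbb M$ with $\theta_k[\nu]=\theta_k$ for all $k\ge0$.
   Context: $I=\{0,1\}$. $\mathbb S$ is the left shift on $I^{\mathbb Z}$, $(\mathbb Sw)(j)=w(j+1)$; for a measure $\eta$, $\mathbb S^j\eta$ denotes the pushforward $\eta\circ\mathbb S^{-j}$. $I^{\mathbb N}$ is the space of $0$–$1$ sequences $(\alpha_i)_{i\ge1}$ with uniform Bernoulli measure $m$, and $\mathbb O$ is the odometer: if $\alpha_1=\dots=\alpha_{n-1}=1$, $\alpha_n=0$ then $\mathbb O[\alpha]_i=0$ ($i<n$), $\mathbb O[\alpha]_n=1$, $\mathbb O[\alpha]_i=\alpha_i$ ($i>n$). $\mathbb M$ is the set of Borel probability measures on $I^{\mathbb Z}\times I^{\mathbb N}$ invariant under $\mathbb S\times\mathbb O$. For $k\ge0$, $0\le r\le 2^k-1$, $A_{r,k}=\{\alpha:\sum_{i=1}^k\alpha_i2^{i-1}=r\}$; $\mathcal P_{r,k}[\nu]$ is the normalized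 projection to $I^{\mathbb Z}$ of the restriction of $\nu$ to $I^{\mathbb Z}\times A_{r,k}$, and $\theta_k[\nu]=\mathcal P_{0,k}[\nu]$ (so $\theta_0[\nu]$ is the projection of $\nu$ to $I^{\mathbb Z}$). *)

theory Defs
  imports "HOL-Probability.Probability"
begin

text \<open>The space I^Z of 0-1 sequences indexed by the integers, with its
  Borel (= product) sigma algebra.\<close>
definition MZ :: "(int \<Rightarrow> bool) measure" where
  "MZ = PiM UNIV (\<lambda>_. count_space UNIV)"

text \<open>The space I^N; sequences are indexed from 0 here
  (the paper's alpha_i corresponds to a (i - 1)).\<close>
definition MN :: "(nat \<Rightarrow> bool) measure" where
  "MN = PiM UNIV (\<lambda>_. count_space UNIV)"

definition shift :: "(int \<Rightarrow> bool) \<Rightarrow> (int \<Rightarrow> bool)" where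
  "shift w = (\<lambda>j. w (j + 1))"

definition shift_pow :: "nat \<Rightarrow> (int \<Rightarrow> bool) measure \<Rightarrow> (int \<Rightarrow> bool) measure" where
  "shift_pow j \<eta> = distr \<eta> MZ (shift ^^ j)"

text \<open>Odometer (adding 1 with carry). The all-ones sequence is sent to the
  all-zeros sequence (continuous extension; a null set for m).\<close>
definition odometer :: "(nat \<Rightarrow> bool) \<Rightarrow> (nat \<Rightarrow> bool)" where
  "odometer a =
     (if \<exists>n. \<not> a n then
        (let n = (LEAST n. \<not> a n) in (\<lambda>i. if i < n then False else if i = n then True else a i))
      else (\<lambda>_. False))"

definition Minv :: "((int \<Rightarrow> bool) \<times> (nat \<Rightarrow> bool)) measure set" where
  "Minv = {\<nu>. prob_space \<nu> \<and> sets \<nu> = sets (MZ \<Otimes>\<^sub>M MN) \<and>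
              distr \<nu> (MZ \<Otimes>\<^sub>M MN) (\<lambda>(w, a). (shift w, odometer a)) = \<nu>}"

text \<open>Cylinder A_{r,k}: sum_{i<k} a_i 2^i = r (0-based indexing).\<close>
definition Acyl :: "nat \<Rightarrow> nat \<Rightarrow> (nat \<Rightarrow> bool) set" where
  "Acyl r k = {a. (\<Sum>i<k. (if a i then 2 ^ i else 0)) = r}"

definition Pproj :: "nat \<Rightarrow> nat \<Rightarrow> ((int \<Rightarrow> bool) \<times> (nat \<Rightarrow> bool)) measure
                     \<Rightarrow> (int \<Rightarrow> bool) measure" where
  "Pproj r k \<nu> =
     scale_measure (1 / emeasure \<nu> (space MZ \<times> Acyl r k))
       (distr (density \<nu> (indicator (UNIV \<times> Acyl r k))) MZ fst)"

definition theta :: "nat \<Rightarrow> ((int \<Rightarrow> bool) \<times> (nat \<Rightarrow> bool)) measure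
                     \<Rightarrow> (int \<Rightarrow> bool) measure" where
  "theta k \<nu> = Pproj 0 k \<nu>"

end

theory Submission
  imports Defs
begin


abbreviation "MP \<equiv> MZ \<Otimes>\<^sub>M MN"

lemma space_MZ[simp]: "space MZ = UNIV"
  by (simp add: MZ_def space_PiM)
lemma space_MN[simp]: "space MN = UNIV"
  by (simp add: MN_def space_PiM)
lemma space_MP: "space MP = UNIV"
  by (simp add: space_pair_measure)

lemma meas_comp_Z[measurable]: "(\<lambda>w. w j) \<in> MZ \<rightarrow>\<^sub>M count_space UNIV"
  unfolding MZ_def by measurable
lemma meas_comp_N[measurable]: "(\<lambda>w. w j) \<in> MN \<rightarrow>\<^sub>M count_space UNIV"
  unfolding MN_def by measurable

lemma meas_shift[measurable]: "shift \<in> MZ \<rightarrow>\<^sub>M MZ"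
proof -
  have "(\<lambda>w j. w (j+1)) \<in> MZ \<rightarrow>\<^sub>M MZ"
    unfolding MZ_def by (rule measurable_PiM_single') (auto simp: space_PiM)
  then show ?thesis unfolding shift_def[abs_def] .
qed

lemma meas_shiftn[measurable]: "shift ^^ n \<in> MZ \<rightarrow>\<^sub>M MZ"
  by (induction n) auto

definition code :: "nat \<Rightarrow> (nat \<Rightarrow> bool) \<Rightarrow> nat" where
  "code k a = (\<Sum>i<k. (if a i then 2 ^ i else 0))"

lemma Acyl_code: "Acyl r k = {a. code k a = r}"
  by (simp add: Acyl_def code_def)

lemma meas_code[measurable]: "code k \<in> MN \<rightarrow>\<^sub>M count_space UNIV"
proof (induction k)
  case 0 then show ?case by (simp add: code_def)
next
  case (Suc k)
  have e: "code (Suc k) = (\<lambda>a. code k a + (if a k then 2^k else 0))"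
    by (auto simp: code_def fun_eq_iff)
  show ?case unfolding e using Suc by measurable
qed

lemma Acyl_sets[measurable]: "Acyl r k \<in> sets MN"
proof -
  have "Acyl r k = code k -` {r} \<inter> space MN" by (auto simp: Acyl_code)
  then show ?thesis by (metis meas_code measurable_sets sets_count_space UNIV_I Pow_UNIV)
qed


lemma code_Suc: "code (Suc k) a = code k a + (if a k then 2^k else 0)"
  by (simp add: code_def)

lemma code_lt: "code k a < 2^k"
  by (induction k) (auto simp: code_Suc code_def)

lemma code_cong: "(\<And>i. i < k \<Longrightarrow> a i = b i) \<Longrightarrow> code k a = code k b"
  by (simp add: code_def)

definition bits :: "nat \<Rightarrow> nat \<Rightarrow> bool" where
  "bits r i = odd (r div 2^i)"

lemma code_bits: "code k (bits r) = r mod 2^k"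
proof (induction k)
  case 0 then show ?case by (simp add: code_def)
next
  case (Suc k)
  have "r mod 2^Suc k = 2^k * (r div 2^k mod 2) + r mod 2^k"
    by (metis mod_mult2_eq power_Suc2)
  then show ?case using Suc by (auto simp: code_Suc bits_def odd_iff_mod_2_eq_one even_iff_mod_2_eq_zero)
qed

lemma odometer_eq: "odometer a = (\<lambda>i. if (\<forall>j<i. a j) then \<not> a i else a i)"
proof (cases "\<exists>n. \<not> a n")
  case True
  define n where "n = (LEAST n. \<not> a n)"
  have n1: "\<not> a n" unfolding n_def using LeastI_ex[OF True] by simp
  have n2: "j < n \<Longrightarrow> a j" for j unfolding n_def using not_less_Least by blast
  show ?thesis unfolding odometer_def using True n1 n2
    by (auto simp: Let_def fun_eq_iff simp flip: n_def) (meson linorder_neqE_nat)+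
next
  case False then show ?thesis by (auto simp: odometer_def fun_eq_iff)
qed

lemma code_odometer_aux:
  "(code k a + 1 = 2^k \<longleftrightarrow> (\<forall>j<k. a j)) \<and>
   code k (odometer a) = (if \<forall>j<k. a j then 0 else code k a + 1)"
proof (induction k)
  case 0 then show ?case by (simp add: code_def)
next
  case (Suc k)
  have lt: "code k a < 2^k" by (rule code_lt)
  have oa: "odometer a k = (if \<forall>j<k. a j then \<not> a k else a k)"
    by (simp add: odometer_eq)
  have all: "(\<forall>j<Suc k. a j) = ((\<forall>j<k. a j) \<and> a k)" using less_Suc_eq by auto
  show ?case
  proof (cases "\<forall>j<k. a j")
    case True
    then have c: "code k a + 1 = 2^k" and o: "code k (odometer a) = 0" using Suc by auto
    show ?thesis using c o oa True all by (auto simp: code_Suc)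
  next
    case False
    then have c: "code k a + 1 < 2^k" and o: "code k (odometer a) = code k a + 1"
      using Suc lt by (auto simp: order_le_less Suc_le_eq)
    show ?thesis using c o oa False all by (auto simp: code_Suc)
  qed
qed

lemma code_odometer: "code k (odometer a) = (code k a + 1) mod 2^k"
proof -
  have lt: "code k a < 2^k" by (rule code_lt)
  show ?thesis using code_odometer_aux[of k a] lt
    by (auto simp: order_le_less Suc_le_eq)
qed

definition pr :: "nat \<Rightarrow> nat \<Rightarrow> nat" where
  "pr k r = (if r = 0 then 2^k - 1 else r - 1)"

lemma odometer_Acyl: "r < 2^k \<Longrightarrow> odometer -` Acyl r k = Acyl (pr k r) k"
proof -
  assume r: "r < 2^k"
  have "code k (odometer a) = r \<longleftrightarrow> code k a = pr k r" for a
  proof -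
    have lt: "code k a < 2^k" by (rule code_lt)
    show ?thesis unfolding code_odometer pr_def using lt r
      by (cases "code k a + 1 = 2^k") (auto simp: order_le_less Suc_le_eq)
  qed
  then show ?thesis by (auto simp: Acyl_code)
qed

lemma pr_lt: "r < 2^k \<Longrightarrow> pr k r < 2^k"
  by (auto simp: pr_def)

lemma meas_odometer[measurable]: "odometer \<in> MN \<rightarrow>\<^sub>M MN"
proof -
  have "(\<lambda>a i. if (\<forall>j<i. a j) then \<not> a i else a i) \<in> MN \<rightarrow>\<^sub>M MN"
    unfolding MN_def by (rule measurable_PiM_single') (auto simp: space_PiM)
  then show ?thesis by (simp add: odometer_eq[abs_def])
qed

lemma meas_SO[measurable]: "(\<lambda>(w, a). (shift w, odometer a)) \<in> MP \<rightarrow>\<^sub>M MP"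
  by measurable

lemma Acyl_empty: "2^k \<le> r \<Longrightarrow> Acyl r k = {}"
  using code_lt by (auto simp: Acyl_code) (metis leD)

lemma pre_SO: "r < 2^k \<Longrightarrow>
  (\<lambda>(w, a). (shift w, odometer a)) -` (C \<times> Acyl r k) \<inter> space MP = (shift -` C) \<times> Acyl (pr k r) k"
  using odometer_Acyl[of r k] by (auto simp: space_MP)


abbreviation "SO \<equiv> (\<lambda>(w, a). (shift w, odometer a))"
abbreviation "T r \<equiv> shift ^^ r"

lemma Minv_D: assumes "\<nu> \<in> Minv" shows "prob_space \<nu>" "sets \<nu> = sets MP" "distr \<nu> MP SO = \<nu>"
  "space \<nu> = UNIV"
  using assms by (auto simp: Minv_def space_MP dest: sets_eq_imp_space_eq)

lemma sets_T[measurable]: "C \<in> sets MZ \<Longrightarrow> T r -` C \<in> sets MZ"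
  using measurable_sets[OF meas_shiftn, of C r] by simp

lemma sets_rect[measurable]: "C \<in> sets MZ \<Longrightarrow> C \<times> Acyl r k \<in> sets MP"
  by simp

lemma inv_step:
  assumes nu: "\<nu> \<in> Minv" and r: "r < 2^k" and C: "C \<in> sets MZ"
  shows "emeasure \<nu> (C \<times> Acyl r k) = emeasure \<nu> (shift -` C \<times> Acyl (pr k r) k)"
proof -
  note D = Minv_D[OF nu]
  have m: "SO \<in> \<nu> \<rightarrow>\<^sub>M MP" by (subst measurable_cong_sets[OF D(2) refl]) (rule meas_SO)
  have "emeasure \<nu> (C \<times> Acyl r k) = emeasure (distr \<nu> MP SO) (C \<times> Acyl r k)" by (simp only: D(3))
  also have "\<dots> = emeasure \<nu> (SO -` (C \<times> Acyl r k) \<inter> space \<nu>)"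
    by (rule emeasure_distr[OF m sets_rect[OF C]])
  also have "SO -` (C \<times> Acyl r k) \<inter> space \<nu> = shift -` C \<times> Acyl (pr k r) k"
    using pre_SO[OF r, of C] D(4) by (simp add: space_MP)
  finally show ?thesis .
qed

lemma inv_iter:
  assumes nu: "\<nu> \<in> Minv" and C: "C \<in> sets MZ"
  shows "r < 2^k \<Longrightarrow> emeasure \<nu> (C \<times> Acyl r k) = emeasure \<nu> (T r -` C \<times> Acyl 0 k)"
  using C
proof (induction r arbitrary: C)
  case 0 then show ?case by simp
next
  case (Suc r)
  have C': "shift -` C \<in> sets MZ" using Suc.prems measurable_sets[OF meas_shift] by simp
  have "emeasure \<nu> (C \<times> Acyl (Suc r) k) = emeasure \<nu> (shift -` C \<times> Acyl r k)"
    using inv_step[OF nu Suc.prems(1) Suc.prems(2)] by (simp add: pr_def)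
  also have "\<dots> = emeasure \<nu> (T r -` (shift -` C) \<times> Acyl 0 k)"
    using Suc.IH[OF _ C'] Suc.prems by simp
  also have "T r -` (shift -` C) = T (Suc r) -` C" by auto
  finally show ?case .
qed

lemma inv_period:
  assumes nu: "\<nu> \<in> Minv" and C: "C \<in> sets MZ"
  shows "emeasure \<nu> (C \<times> Acyl 0 k) = emeasure \<nu> (T (2^k) -` C \<times> Acyl 0 k)"
proof -
  have C': "shift -` C \<in> sets MZ" using C measurable_sets[OF meas_shift] by simp
  have "emeasure \<nu> (C \<times> Acyl 0 k) = emeasure \<nu> (shift -` C \<times> Acyl (2^k - 1) k)"
    using inv_step[OF nu _ C, of 0 k] by (simp add: pr_def)
  also have "\<dots> = emeasure \<nu> (T (2^k - 1) -` (shift -` C) \<times> Acyl 0 k)"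
    using inv_iter[OF nu C', of "2^k - 1" k] by simp
  also have "T (2^k - 1) -` (shift -` C) = T (2^k) -` C"
  proof -
    have "\<And>n. T n -` (shift -` C) = T (Suc n) -` C" by auto
    from this[of "2^k - 1"] show ?thesis by simp
  qed
  finally show ?thesis .
qed

lemma Acyl_disj: "disjoint_family_on (\<lambda>r. UNIV \<times> Acyl r k) A"
  by (auto simp: disjoint_family_on_def Acyl_code)

lemma Acyl_cover: "(\<Union>r\<in>{..<2^k}. UNIV \<times> Acyl r k) = UNIV"
  using code_lt by (auto simp: Acyl_code)

lemma rect_sets_nu: "\<nu> \<in> Minv \<Longrightarrow> C \<in> sets MZ \<Longrightarrow> C \<times> Acyl r k \<in> sets \<nu>"
  using Minv_D(2) sets_rect by blast

lemma UNIV_sets_MZ: "UNIV \<in> sets MZ"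
  using sets.top[of MZ] by simp

lemma inv_total:
  assumes nu: "\<nu> \<in> Minv"
  shows "2^k * emeasure \<nu> (UNIV \<times> Acyl 0 k) = 1"
proof -
  note D = Minv_D[OF nu]
  interpret prob_space \<nu> by (rule D(1))
  have im: "(\<lambda>r. UNIV \<times> Acyl r k) ` {..<2^k} \<subseteq> sets \<nu>"
    using rect_sets_nu[OF nu UNIV_sets_MZ] by blast
  have "(\<Sum>r\<in>{..<2^k}. emeasure \<nu> (UNIV \<times> Acyl r k)) = emeasure \<nu> (\<Union>r\<in>{..<2^k}. UNIV \<times> Acyl r k)"
    by (rule sum_emeasure[OF im Acyl_disj finite_lessThan])
  also have "\<dots> = emeasure \<nu> (space \<nu>)" by (simp only: Acyl_cover D(4))
  also have "\<dots> = 1" by (rule emeasure_space_1)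
  also have "(\<Sum>r\<in>{..<2^k}. emeasure \<nu> (UNIV \<times> Acyl r k)) = (\<Sum>r\<in>{..<(2::nat)^k}. emeasure \<nu> (UNIV \<times> Acyl 0 k))"
  proof (rule sum.cong[OF refl])
    fix r assume "r \<in> {..<(2::nat)^k}"
    then show "emeasure \<nu> (UNIV \<times> Acyl r k) = emeasure \<nu> (UNIV \<times> Acyl 0 k)"
      using inv_iter[OF nu UNIV_sets_MZ, of r k] by simp
  qed
  also have "\<dots> = of_nat (2^k) * emeasure \<nu> (UNIV \<times> Acyl 0 k)" by simp
  finally show ?thesis by simp
qed

lemma Dlem:
  assumes S: "sets \<nu> = sets MP" and A: "A \<in> sets MN" and C: "C \<in> sets MZ"
  shows "emeasure (distr (density \<nu> (indicator (UNIV \<times> A))) MZ fst) C = emeasure \<nu> (C \<times> A)"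
proof -
  have sp: "space \<nu> = UNIV" using sets_eq_imp_space_eq[OF S] by (simp add: space_MP)
  have sd: "sets (density \<nu> (indicator (UNIV \<times> A))) = sets MP" using S by simp
  have m: "fst \<in> density \<nu> (indicator (UNIV \<times> A)) \<rightarrow>\<^sub>M MZ"
    by (subst measurable_cong_sets[OF sd refl]) (rule measurable_fst)
  have UA: "UNIV \<times> A \<in> sets \<nu>" using S A UNIV_sets_MZ by simp
  have fC: "fst -` C \<inter> space \<nu> \<in> sets \<nu>" using S C sp
    by (metis measurable_sets measurable_fst measurable_cong_sets[OF S refl])
  have "emeasure (distr (density \<nu> (indicator (UNIV \<times> A))) MZ fst) C
     = emeasure (density \<nu> (indicator (UNIV \<times> A))) (fst -` C \<inter> space (density \<nu> (indicator (UNIV \<times> A))))"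
    by (rule emeasure_distr[OF m C])
  also have "space (density \<nu> (indicator (UNIV \<times> A))) = space \<nu>" by simp
  also have "emeasure (density \<nu> (indicator (UNIV \<times> A))) (fst -` C \<inter> space \<nu>) = emeasure \<nu> ((UNIV \<times> A) \<inter> (fst -` C \<inter> space \<nu>))"
    by (rule emeasure_restricted[OF UA fC])
  also have "(UNIV \<times> A) \<inter> (fst -` C \<inter> space \<nu>) = C \<times> A" by (auto simp: sp)
  finally show ?thesis .
qed

lemma sets_Pproj[simp]: "sets (Pproj r k \<nu>) = sets MZ"
  by (simp add: Pproj_def)

lemma emeasure_Pproj:
  assumes S: "sets \<nu> = sets MP" and C: "C \<in> sets MZ"
  shows "emeasure (Pproj r k \<nu>) C = (1 / emeasure \<nu> (UNIV \<times> Acyl r k)) * emeasure \<nu> (C \<times> Acyl r k)"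
  unfolding Pproj_def using Dlem[OF S Acyl_sets C] by simp

lemma inv1:
  fixes c x :: ennreal assumes "c * x = 1" shows "1 / x = c"
proof -
  have x0: "x \<noteq> 0" using assms by auto
  have xt: "x \<noteq> top"
  proof
    assume "x = top"
    with assms show False by (cases "c = 0") (auto simp: ennreal_mult_top)
  qed
  have "1 / x = (c * x) / x" using assms by simp
  also have "\<dots> = c" using x0 xt by (rule mult_divide_eq_ennreal)
  finally show ?thesis .
qed

lemma inv_theta:
  assumes nu: "\<nu> \<in> Minv" and C: "C \<in> sets MZ"
  shows "emeasure (theta k \<nu>) C = 2^k * emeasure \<nu> (C \<times> Acyl 0 k)"
proof -
  have t: "2^k * emeasure \<nu> (UNIV \<times> Acyl 0 k) = 1" by (rule inv_total[OF nu])
  then have "1 / emeasure \<nu> (UNIV \<times> Acyl 0 k) = 2^k"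
    by (rule inv1)
  then show ?thesis unfolding theta_def using emeasure_Pproj[OF Minv_D(2)[OF nu] C] by simp
qed


lemma sets_theta[simp]: "sets (theta k \<nu>) = sets MZ"
  by (simp add: theta_def)
lemma space_theta[simp]: "space (theta k \<nu>) = UNIV"
  using sets_eq_imp_space_eq[OF sets_theta] by simp
lemma sets_shift_pow[simp]: "sets (shift_pow n \<eta>) = sets MZ"
  by (simp add: shift_pow_def)

lemma emeasure_shift_pow:
  assumes "sets \<eta> = sets MZ" "C \<in> sets MZ"
  shows "emeasure (shift_pow n \<eta>) C = emeasure \<eta> (T n -` C)"
proof -
  have m: "T n \<in> \<eta> \<rightarrow>\<^sub>M MZ" by (subst measurable_cong_sets[OF assms(1) refl]) (rule meas_shiftn)
  have sp: "space \<eta> = UNIV" using sets_eq_imp_space_eq[OF assms(1)] by simp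
  show ?thesis unfolding shift_pow_def using emeasure_distr[OF m assms(2)] sp by simp
qed

lemma E_nu:
  assumes nu: "\<nu> \<in> Minv" and r: "r < 2^k" and C: "C \<in> sets MZ"
  shows "2^k * emeasure \<nu> (C \<times> Acyl r k) = emeasure (theta k \<nu>) (T r -` C)"
  using inv_theta[OF nu sets_T[OF C], of k r] inv_iter[OF nu C r] by simp

lemma part1a:
  assumes nu: "\<nu> \<in> Minv"
  shows "shift_pow (2^k) (theta k \<nu>) = theta k \<nu>"
proof (rule measure_eqI)
  show "sets (shift_pow (2^k) (theta k \<nu>)) = sets (theta k \<nu>)" by simp
  fix C assume "C \<in> sets (shift_pow (2^k) (theta k \<nu>))"
  then have C: "C \<in> sets MZ" by simp
  have "emeasure (shift_pow (2^k) (theta k \<nu>)) C = emeasure (theta k \<nu>) (T (2^k) -` C)"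
    by (rule emeasure_shift_pow[OF sets_theta C])
  also have "\<dots> = 2^k * emeasure \<nu> (T (2^k) -` C \<times> Acyl 0 k)"
    by (rule inv_theta[OF nu sets_T[OF C]])
  also have "\<dots> = 2^k * emeasure \<nu> (C \<times> Acyl 0 k)"
    using inv_period[OF nu C, of k] by simp
  also have "\<dots> = emeasure (theta k \<nu>) C" using inv_theta[OF nu C] by simp
  finally show "emeasure (shift_pow (2^k) (theta k \<nu>)) C = emeasure (theta k \<nu>) C" .
qed

lemma code_Suc_0: "code (Suc k) a = 0 \<longleftrightarrow> code k a = 0 \<and> \<not> a k"
  by (auto simp: code_Suc)

lemma code_Suc_pow: "code (Suc k) a = 2^k \<longleftrightarrow> code k a = 0 \<and> a k"
  using code_lt[of k a] by (auto simp: code_Suc)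

lemma Acyl_split: "Acyl 0 k = Acyl 0 (Suc k) \<union> Acyl (2^k) (Suc k)"
  "Acyl 0 (Suc k) \<inter> Acyl (2^k) (Suc k) = {}"
  by (auto simp: Acyl_code code_Suc_0 code_Suc_pow)

lemma half2:
  fixes x :: ennreal shows "(2 * 2^k * x) / 2 = 2^k * x"
proof -
  have "(2 * 2^k * x) / 2 = ((2^k * x) * 2) / 2" by (simp add: ac_simps)
  also have "\<dots> = 2^k * x" by (rule mult_divide_eq_ennreal) auto
  finally show ?thesis .
qed

lemma part1b:
  assumes nu: "\<nu> \<in> Minv" and B: "B \<in> sets MZ"
  shows "emeasure (theta k \<nu>) B =
      (emeasure (theta (Suc k) \<nu>) B + emeasure (shift_pow (2 ^ k) (theta (Suc k) \<nu>)) B) / 2"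
proof -
  have r: "(2::nat)^k < 2^Suc k" by simp
  have a: "emeasure (theta (Suc k) \<nu>) B = 2 * 2^k * emeasure \<nu> (B \<times> Acyl 0 (Suc k))"
    using inv_theta[OF nu B, of "Suc k"] by simp
  have b: "emeasure (shift_pow (2 ^ k) (theta (Suc k) \<nu>)) B = 2 * 2^k * emeasure \<nu> (B \<times> Acyl (2^k) (Suc k))"
    using emeasure_shift_pow[OF sets_theta B, of "2^k" "Suc k" \<nu>] E_nu[OF nu r B] by simp
  have c: "emeasure \<nu> (B \<times> Acyl 0 (Suc k)) + emeasure \<nu> (B \<times> Acyl (2^k) (Suc k)) = emeasure \<nu> (B \<times> Acyl 0 k)"
  proof -
    have "B \<times> Acyl 0 k = B \<times> Acyl 0 (Suc k) \<union> B \<times> Acyl (2^k) (Suc k)"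
      using Acyl_split(1)[of k] by blast
    moreover have "B \<times> Acyl 0 (Suc k) \<inter> B \<times> Acyl (2^k) (Suc k) = {}"
      using Acyl_split(2)[of k] by blast
    ultimately show ?thesis
      using plus_emeasure[OF rect_sets_nu[OF nu B] rect_sets_nu[OF nu B]] by simp
  qed
  have "(emeasure (theta (Suc k) \<nu>) B + emeasure (shift_pow (2 ^ k) (theta (Suc k) \<nu>)) B) / 2
      = (2 * 2^k * emeasure \<nu> (B \<times> Acyl 0 k)) / 2"
    unfolding a b c[symmetric] by (simp add: distrib_left)
  also have "\<dots> = 2^k * emeasure \<nu> (B \<times> Acyl 0 k)" by (rule half2)
  also have "\<dots> = emeasure (theta k \<nu>) B" using inv_theta[OF nu B] by simp
  finally show ?thesis by simp
qed

definition G :: "((int \<Rightarrow> bool) \<times> (nat \<Rightarrow> bool)) set set" where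
  "G = {C \<times> Acyl r k | C r k. C \<in> sets MZ}"

lemma code_mod: "k \<le> k' \<Longrightarrow> code k a = code k' a mod 2^k"
proof (induction k' rule: dec_induct)
  case base then show ?case using code_lt[of k a] by simp
next
  case (step k')
  have "2^k dvd (2::nat)^k'" using step(1) by (simp add: le_imp_power_dvd)
  then show ?case using step by (auto simp: code_Suc mod_add_right_eq[symmetric])
qed

lemma Acyl_Int_le: "k \<le> k' \<Longrightarrow> \<exists>r'' k''. Acyl r k \<inter> Acyl r' k' = Acyl r'' k''"
proof -
  assume kk: "k \<le> k'"
  show ?thesis
  proof (cases "r' mod 2^k = r")
    case True
    then have "Acyl r k \<inter> Acyl r' k' = Acyl r' k'" using code_mod[OF kk] by (auto simp: Acyl_code)
    then show ?thesis by blast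
  next
    case False
    then have "Acyl r k \<inter> Acyl r' k' = Acyl (2^k') k'"
      using code_mod[OF kk] Acyl_empty[of k' "2^k'"] by (auto simp: Acyl_code)
    then show ?thesis by blast
  qed
qed

lemma Acyl_Int: "\<exists>r'' k''. Acyl r k \<inter> Acyl r' k' = Acyl r'' k''"
proof (cases "k \<le> k'")
  case True then show ?thesis by (rule Acyl_Int_le)
next
  case False
  then obtain r'' k'' where "Acyl r' k' \<inter> Acyl r k = Acyl r'' k''" using Acyl_Int_le[of k' k r' r] by auto
  then show ?thesis by (metis Int_commute)
qed

lemma Int_stable_G: "Int_stable G"
proof (rule Int_stableI)
  fix X Y assume "X \<in> G" "Y \<in> G"
  then obtain C r k C' r' k' where X: "X = C \<times> Acyl r k" "C \<in> sets MZ" and Y: "Y = C' \<times> Acyl r' k'" "C' \<in> sets MZ"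
    unfolding G_def by blast
  obtain r'' k'' where e: "Acyl r k \<inter> Acyl r' k' = Acyl r'' k''" using Acyl_Int by blast
  have "X \<inter> Y = (C \<inter> C') \<times> Acyl r'' k''" using e X Y by blast
  moreover have "C \<inter> C' \<in> sets MZ" using X Y by auto
  ultimately show "X \<inter> Y \<in> G" unfolding G_def by blast
qed

lemma Acyl_0_0: "Acyl 0 0 = UNIV"
  by (simp add: Acyl_code code_def)

lemma comp_in_Acyl_sigma: "{f. f i \<in> A} = (\<Union>r\<in>{r. r < 2^Suc i \<and> (2^i \<le> r) \<in> A}. Acyl r (Suc i))"
proof -
  have e: "f i = (2^i \<le> code (Suc i) f)" for f :: "nat \<Rightarrow> bool"
    using code_lt[of i f] by (auto simp: code_Suc)
  show ?thesis using code_lt[of "Suc i"] by (auto simp: Acyl_code e)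
qed

lemma rect_sigma:
  assumes a: "a \<in> sets MZ" and b: "b \<in> sigma_sets UNIV {{f. f i \<in> A} | i A. True}"
  shows "a \<times> b \<in> sigma_sets UNIV G"
  using b
proof (induction rule: sigma_sets.induct)
  case (Basic b)
  then obtain i A where b: "b = {f. f i \<in> A}" by blast
  have aG: "\<And>r k. a \<times> Acyl r k \<in> sigma_sets UNIV G" using a unfolding G_def by (blast intro: sigma_sets.Basic)
  have "a \<times> b = \<Union>((\<lambda>r. a \<times> Acyl r (Suc i)) ` {r. r < 2^Suc i \<and> (2^i \<le> r) \<in> A})"
    unfolding b comp_in_Acyl_sigma by blast
  also have "\<Union>((\<lambda>r. a \<times> Acyl r (Suc i)) ` {r. r < 2^Suc i \<and> (2^i \<le> r) \<in> A}) \<in> sigma_sets UNIV G"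
    by (rule sigma_sets_UNION) (auto intro: aG)
  finally show ?case .
next
  case Empty then show ?case by (simp add: sigma_sets.Empty)
next
  case (Compl b)
  have aU: "a \<times> UNIV \<in> sigma_sets UNIV G"
    using a by (auto simp: G_def Acyl_0_0[symmetric] intro!: sigma_sets.Basic)
  have "a \<times> (UNIV - b) = UNIV - ((UNIV - a \<times> UNIV) \<union> a \<times> b)" by blast
  also have "\<dots> \<in> sigma_sets UNIV G"
    by (intro sigma_sets.Compl sigma_sets_Un aU Compl.IH)
  finally show ?case .
next
  case (Union b)
  have "a \<times> (\<Union>i. b i) = (\<Union>i. a \<times> b i)" by blast
  also have "\<dots> \<in> sigma_sets UNIV G" by (intro sigma_sets.Union Union.IH)
  finally show ?case .
qed

lemma sets_MN_single: "sets MN = sigma_sets UNIV {{f. f i \<in> A} | i A. True}"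
  unfolding MN_def sets_PiM_single by (simp add: space_PiM)

lemma GEN: "sets MP = sigma_sets UNIV G"
proof
  show "sigma_sets UNIV G \<subseteq> sets MP"
  proof -
    have "G \<subseteq> sets MP" unfolding G_def by auto
    from sets.sigma_sets_subset[OF this] show ?thesis by (simp add: space_MP)
  qed
  show "sets MP \<subseteq> sigma_sets UNIV G"
    unfolding sets_pair_measure space_MZ space_MN UNIV_Times_UNIV
  proof (rule sigma_sets_mono)
    show "{a \<times> b |a b. a \<in> sets MZ \<and> b \<in> sets MN} \<subseteq> sigma_sets UNIV G"
      using rect_sigma unfolding sets_MN_single by fastforce
  qed
qed

lemma determined:
  assumes s1: "sets \<nu>1 = sets MP" and s2: "sets \<nu>2 = sets MP" and fin: "emeasure \<nu>1 UNIV \<noteq> \<infinity>"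
    and eq: "\<And>C r k. C \<in> sets MZ \<Longrightarrow> emeasure \<nu>1 (C \<times> Acyl r k) = emeasure \<nu>2 (C \<times> Acyl r k)"
  shows "\<nu>1 = \<nu>2"
proof (rule measure_eqI_generator_eq[OF Int_stable_G, of UNIV, where A="\<lambda>_. UNIV"])
  show "G \<subseteq> Pow UNIV" by simp
  show "\<And>X. X \<in> G \<Longrightarrow> emeasure \<nu>1 X = emeasure \<nu>2 X" using eq unfolding G_def by blast
  show "sets \<nu>1 = sigma_sets UNIV G" using s1 GEN by simp
  show "sets \<nu>2 = sigma_sets UNIV G" using s2 GEN by simp
  show "range (\<lambda>_. UNIV) \<subseteq> G" unfolding G_def using UNIV_sets_MZ Acyl_0_0
    by (auto intro!: exI[of _ UNIV] exI[of _ 0])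
  show "(\<Union>i::nat. UNIV) = UNIV" by simp
  show "\<And>i::nat. emeasure \<nu>1 UNIV \<noteq> \<infinity>" using fin .
qed

lemma ennreal_mult_left_cancel_pow:
  fixes a b :: ennreal assumes "2^k * a = 2^k * b" shows "a = b"
proof -
  have nz: "(2::ennreal)^k \<noteq> 0" "(2::ennreal)^k \<noteq> top" by (auto simp: power_eq_top_ennreal)
  have "a = (a * 2^k) / 2^k" by (rule mult_divide_eq_ennreal[symmetric, OF nz])
  also have "\<dots> = (b * 2^k) / 2^k" using assms by (simp add: ac_simps)
  also have "\<dots> = b" by (rule mult_divide_eq_ennreal[OF nz])
  finally show ?thesis .
qed

lemma part2:
  assumes nu: "\<nu> \<in> Minv" and nu': "\<nu>' \<in> Minv" and th: "\<And>k. theta k \<nu> = theta k \<nu>'"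
  shows "\<nu> = \<nu>'"
proof (rule determined[OF Minv_D(2)[OF nu] Minv_D(2)[OF nu']])
  interpret prob_space \<nu> using Minv_D(1)[OF nu] .
  show "emeasure \<nu> UNIV \<noteq> \<infinity>" using Minv_D(4)[OF nu] by simp
  fix C r k assume C: "C \<in> sets MZ"
  show "emeasure \<nu> (C \<times> Acyl r k) = emeasure \<nu>' (C \<times> Acyl r k)"
  proof (cases "r < 2^k")
    case True
    have "2^k * emeasure \<nu> (C \<times> Acyl r k) = 2^k * emeasure \<nu>' (C \<times> Acyl r k)"
      using E_nu[OF nu True C] E_nu[OF nu' True C] th by simp
    then show ?thesis by (rule ennreal_mult_left_cancel_pow)
  next
    case False then show ?thesis using Acyl_empty[of k r] by simp
  qed
qed


lemma pow2_inv: "(2::ennreal)^k * (1 / 2^k) = 1"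
proof -
  have nz: "(2::ennreal)^k \<noteq> 0" "(2::ennreal)^k \<noteq> top" by (auto simp: power_eq_top_ennreal)
  have "(2::ennreal)^k * (1 / 2^k) = (1 * 2^k) / 2^k" by (simp add: ennreal_times_divide)
  also have "\<dots> = 1" by (rule mult_divide_eq_ennreal[OF nz])
  finally show ?thesis .
qed

lemma pow2_inv_Suc: "(1 / (2::ennreal)^Suc k) * 2 = 1 / 2^k"
proof (rule ennreal_mult_left_cancel_pow[of k])
  have "(2::ennreal)^k * ((1 / 2^Suc k) * 2) = 2^Suc k * (1 / 2^Suc k)" by (simp add: ac_simps)
  also have "\<dots> = 1" by (rule pow2_inv)
  also have "\<dots> = 2^k * (1 / 2^k)" by (rule pow2_inv[symmetric])
  finally show "(2::ennreal)^k * ((1 / 2^Suc k) * 2) = 2^k * (1 / 2^k)" .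
qed

lemma half_eq: fixes e z :: ennreal assumes "e = z / 2" shows "2 * e = z"
proof -
  have "2 * e = 2 * z / 2" using assms by (simp add: ennreal_times_divide)
  also have "\<dots> = z * 2 / 2" by (simp add: mult.commute)
  also have "\<dots> = z" by (rule mult_divide_eq_ennreal) simp_all
  finally show ?thesis .
qed

lemma sum_split2: "(\<Sum>r<2^Suc k. f r) = (\<Sum>s<2^k. f s + f (s + 2^k)) " for f :: "nat \<Rightarrow> ennreal"
proof -
  have "(\<Sum>r<2^Suc k. f r) = (\<Sum>r\<in>{0..<2^k}. f r) + (\<Sum>r\<in>{2^k..<2^k+2^k}. f r)"
    by (subst sum.atLeastLessThan_concat) (auto simp: lessThan_atLeast0 mult_2)
  also have "(\<Sum>r\<in>{2^k..<2^k+2^k}. f r) = (\<Sum>s\<in>{0..<2^k}. f (s + 2^k))"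
    using sum.shift_bounds_nat_ivl[of f 0 "2^k" "2^k"] by simp
  finally show ?thesis by (simp add: sum.distrib lessThan_atLeast0)
qed

definition trunc :: "nat \<Rightarrow> (int \<Rightarrow> bool) \<times> (nat \<Rightarrow> bool) \<Rightarrow> (int \<Rightarrow> bool) \<times> (nat \<Rightarrow> bool)" where
  "trunc k p = (fst p, \<lambda>i. i < k \<and> snd p i)"

lemma meas_trunc[measurable]: "trunc k \<in> MP \<rightarrow>\<^sub>M MP"
proof -
  have "(\<lambda>p i. i < k \<and> snd p i) \<in> MP \<rightarrow>\<^sub>M MN"
    unfolding MN_def by (rule measurable_PiM_single') (auto simp: space_PiM MN_def[symmetric])
  then show ?thesis unfolding trunc_def by measurable
qed

lemma bits_bit: "bits r i = bit r i"
  by (simp add: bits_def bit_nat_def)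

lemma bits_mod: "(\<lambda>i. i < k \<and> bits r i) = bits (r mod 2^k)"
  by (auto simp: fun_eq_iff bits_bit take_bit_eq_mod[symmetric] bit_take_bit_iff)

lemma trunc_bits: "trunc k (w, bits r) = (w, bits (r mod 2^k))"
  by (simp add: trunc_def bits_mod)

lemma trunc_trunc: "k \<le> k' \<Longrightarrow> trunc k (trunc k' p) = trunc k p"
  by (auto simp: trunc_def fun_eq_iff)

lemma meas_g[measurable]: "(\<lambda>w. (T r w, bits r)) \<in> MZ \<rightarrow>\<^sub>M MP"
  by measurable

lemma UNIV_sets_MP: "UNIV \<in> sets MP"
  using sets.top[of MP] by (simp add: space_MP)

locale cons =
  fixes ths :: "nat \<Rightarrow> (int \<Rightarrow> bool) measure"
  assumes hP: "\<And>k. prob_space (ths k)" and hsets: "\<And>k. sets (ths k) = sets MZ"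
  and hS: "\<And>k. shift_pow (2^k) (ths k) = ths k"
  and hH: "\<And>k B. B \<in> sets MZ \<Longrightarrow> emeasure (ths k) B =
                  (emeasure (ths (Suc k)) B + emeasure (shift_pow (2 ^ k) (ths (Suc k))) B) / 2"
begin

lemma hspace: "space (ths k) = UNIV"
  using sets_eq_imp_space_eq[OF hsets[of k]] by simp

definition Km :: "nat \<Rightarrow> nat \<Rightarrow> ((int \<Rightarrow> bool) \<times> (nat \<Rightarrow> bool)) measure" where
  "Km k r = scale_measure (1 / 2^k) (distr (ths k) MP (\<lambda>w. (T r w, bits r)))"

definition R :: "nat \<Rightarrow> ((int \<Rightarrow> bool) \<times> (nat \<Rightarrow> bool)) measure" where
  "R k = bind (count_space {..<2^k}) (Km k)"

lemma meas_g'[measurable]: "(\<lambda>w. (T r w, bits r)) \<in> ths k \<rightarrow>\<^sub>M MP"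
  by (subst measurable_cong_sets[OF hsets refl]) (rule meas_g)

lemma sets_Km: "sets (Km k r) = sets MP"
  by (simp add: Km_def)

lemma emeasure_Km: "X \<in> sets MP \<Longrightarrow> emeasure (Km k r) X = (1/2^k) * emeasure (ths k) ((\<lambda>w. (T r w, bits r)) -` X)"
  unfolding Km_def by (simp add: emeasure_distr hspace)

lemma Km_subprob: "Km k r \<in> space (subprob_algebra MP)"
proof -
  interpret prob_space "ths k" by (rule hP)
  have "emeasure (Km k r) (space (Km k r)) = (1/2^k) * 1"
    using emeasure_Km[OF UNIV_sets_MP, of k r] sets_Km[of k r] sets_eq_imp_space_eq[OF sets_Km[of k r]]
    using emeasure_space_1 hspace[of k] by (simp add: space_MP)
  also have "\<dots> = 1 * (1/(2::ennreal)^k)" by simp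
  also have "\<dots> \<le> 2^k * (1/2^k)" by (rule mult_right_mono) (simp_all add: one_le_power)
  also have "\<dots> = 1" by (rule pow2_inv)
  finally have "emeasure (Km k r) (space (Km k r)) \<le> 1" .
  moreover have "space (Km k r) \<noteq> {}" using sets_eq_imp_space_eq[OF sets_Km[of k r]] by (simp add: space_MP)
  ultimately have "subprob_space (Km k r)" by (rule subprob_spaceI)
  then show ?thesis by (simp add: space_subprob_algebra sets_Km)
qed

lemma Km_meas: "Km k \<in> count_space {..<2^k} \<rightarrow>\<^sub>M subprob_algebra MP"
  using Km_subprob by simp

lemma sets_R[simp]: "sets (R k) = sets MP"
  unfolding R_def by (rule sets_bind[OF sets_Km]) (simp add: lessThan_empty_iff)

lemma space_R[simp]: "space (R k) = UNIV"
  using sets_eq_imp_space_eq[OF sets_R[of k]] by (simp add: space_MP)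

lemma emeasure_R: "X \<in> sets MP \<Longrightarrow>
  emeasure (R k) X = (\<Sum>r<2^k. (1/2^k) * emeasure (ths k) ((\<lambda>w. (T r w, bits r)) -` X))"
  unfolding R_def
  by (subst emeasure_bind[OF _ Km_meas]) (auto simp: nn_integral_count_space_finite emeasure_Km lessThan_empty_iff)

lemma R_prob: "prob_space (R k)"
proof
  have "emeasure (R k) (space (R k)) = (\<Sum>r<(2::nat)^k. (1/2^k) * 1)"
    using emeasure_R[OF UNIV_sets_MP, of k] prob_space.emeasure_space_1[OF hP[of k]] by (simp add: space_MP hspace)
  also have "\<dots> = 1" using pow2_inv[of k] by simp
  finally show "emeasure (R k) (space (R k)) = 1" .
qed

lemma R_step: "distr (R (Suc k)) MP (trunc k) = R k"
proof (rule measure_eqI)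
  show "sets (distr (R (Suc k)) MP (trunc k)) = sets (R k)" by simp
  fix X assume "X \<in> sets (distr (R (Suc k)) MP (trunc k))"
  then have X: "X \<in> sets MP" by simp
  have mt: "trunc k \<in> R (Suc k) \<rightarrow>\<^sub>M MP"
    by (subst measurable_cong_sets[OF sets_R refl]) (rule meas_trunc)
  define B where "B s = (\<lambda>w. (T s w, bits s)) -` X" for s
  have B: "B s \<in> sets MZ" for s unfolding B_def using measurable_sets[OF meas_g X] by simp
  have tX: "trunc k -` X \<inter> UNIV \<in> sets MP" using measurable_sets[OF meas_trunc X] by (simp add: space_MP)
  have "emeasure (distr (R (Suc k)) MP (trunc k)) X = emeasure (R (Suc k)) (trunc k -` X \<inter> UNIV)"
    using emeasure_distr[OF mt X] by simp
  also have "\<dots> = (\<Sum>r<2^Suc k. (1/2^Suc k) * emeasure (ths (Suc k)) ((\<lambda>w. (T r w, bits r)) -` (trunc k -` X \<inter> UNIV)))"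
    by (rule emeasure_R[OF tX])
  also have "\<dots> = (\<Sum>r<2^Suc k. (1/2^Suc k) * emeasure (ths (Suc k)) ((\<lambda>w. (T r w, bits (r mod 2^k))) -` X))"
    by (intro sum.cong refl arg_cong2[where f="(*)"] arg_cong2[where f=emeasure]) (auto simp: trunc_bits)
  also have "\<dots> = (\<Sum>s<2^k. (1/2^Suc k) * emeasure (ths (Suc k)) ((\<lambda>w. (T s w, bits (s mod 2^k))) -` X)
       + (1/2^Suc k) * emeasure (ths (Suc k)) ((\<lambda>w. (T (s + 2^k) w, bits ((s + 2^k) mod 2^k))) -` X))"
    by (rule sum_split2)
  also have "\<dots> = (\<Sum>s<2^k. (1/2^Suc k) * (emeasure (ths (Suc k)) (B s) + emeasure (ths (Suc k)) (T (2^k) -` B s)))"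
  proof (rule sum.cong[OF refl])
    fix s assume "s \<in> {..<(2::nat)^k}"
    then have s: "s < 2^k" by simp
    have e1: "(\<lambda>w. (T s w, bits (s mod 2^k))) -` X = B s" using s by (simp add: B_def)
    have e2: "(\<lambda>w. (T (s + 2^k) w, bits ((s + 2^k) mod 2^k))) -` X = T (2^k) -` B s"
      using s by (auto simp: B_def funpow_add)
    show "(1/2^Suc k) * emeasure (ths (Suc k)) ((\<lambda>w. (T s w, bits (s mod 2^k))) -` X)
       + (1/2^Suc k) * emeasure (ths (Suc k)) ((\<lambda>w. (T (s + 2^k) w, bits ((s + 2^k) mod 2^k))) -` X)
       = (1/2^Suc k) * (emeasure (ths (Suc k)) (B s) + emeasure (ths (Suc k)) (T (2^k) -` B s))"
      unfolding e1 e2 by (simp add: distrib_left)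
  qed
  also have "\<dots> = (\<Sum>s<2^k. (1/2^Suc k) * (2 * emeasure (ths k) (B s)))"
  proof (rule sum.cong[OF refl])
    fix s
    have "2 * emeasure (ths k) (B s) = emeasure (ths (Suc k)) (B s) + emeasure (shift_pow (2 ^ k) (ths (Suc k))) (B s)"
      by (rule half_eq[OF hH[OF B]])
    also have "emeasure (shift_pow (2 ^ k) (ths (Suc k))) (B s) = emeasure (ths (Suc k)) (T (2^k) -` B s)"
      by (rule emeasure_shift_pow[OF hsets B])
    finally show "(1/2^Suc k) * (emeasure (ths (Suc k)) (B s) + emeasure (ths (Suc k)) (T (2^k) -` B s))
        = (1/2^Suc k) * (2 * emeasure (ths k) (B s))" by simp
  qed
  also have "\<dots> = (\<Sum>s<2^k. (1/2^k) * emeasure (ths k) (B s))"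
    by (simp add: mult.assoc[symmetric] pow2_inv_Suc del: power_Suc)
  also have "\<dots> = emeasure (R k) X" using emeasure_R[OF X] by (simp add: B_def)
  finally show "emeasure (distr (R (Suc k)) MP (trunc k)) X = emeasure (R k) X" .
qed

end


definition enc :: "(int \<Rightarrow> bool) \<times> (nat \<Rightarrow> bool) \<Rightarrow> (int + nat \<Rightarrow> bool discrete)" where
  "enc p = (\<lambda>x. case x of Inl j \<Rightarrow> discrete (fst p j) | Inr i \<Rightarrow> discrete (snd p i))"

definition dec :: "(int + nat \<Rightarrow> bool discrete) \<Rightarrow> (int \<Rightarrow> bool) \<times> (nat \<Rightarrow> bool)" where
  "dec f = (\<lambda>j. of_discrete (f (Inl j)), \<lambda>i. of_discrete (f (Inr i)))"

definition BB :: "int + nat \<Rightarrow> bool discrete measure" where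
  "BB = (\<lambda>_. borel)"

definition KK :: "(int + nat) set \<Rightarrow> nat" where
  "KK J = Max (insert 0 (Suc ` (Inr -` J)))"

lemma dec_enc[simp]: "dec (enc p) = p"
  by (simp add: dec_def enc_def discrete_inverse)

lemma space_BB[simp]: "space (BB x) = UNIV"
  by (simp add: BB_def)

lemma meas_disc: "(f :: bool discrete \<Rightarrow> 'b) \<in> borel \<rightarrow>\<^sub>M count_space UNIV"
proof -
  have s: "sets (borel :: bool discrete measure) = sets (count_space UNIV)"
    by (simp add: sets_borel_eq_count_space)
  show ?thesis by (subst measurable_cong_sets[OF s refl]) simp
qed

lemma meas_todisc: "(discrete :: bool \<Rightarrow> bool discrete) \<in> count_space UNIV \<rightarrow>\<^sub>M borel"
  by simp

lemma meas_enc_comp: "(\<lambda>p. enc p x) \<in> MP \<rightarrow>\<^sub>M BB x"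
proof (cases x)
  case (Inl j)
  have "(\<lambda>p. discrete (fst p j)) \<in> MP \<rightarrow>\<^sub>M borel"
    by (rule measurable_compose[OF _ meas_todisc]) measurable
  then show ?thesis using Inl by (simp add: enc_def BB_def)
next
  case (Inr i)
  have "(\<lambda>p. discrete (snd p i)) \<in> MP \<rightarrow>\<^sub>M borel"
    by (rule measurable_compose[OF _ meas_todisc]) measurable
  then show ?thesis using Inr by (simp add: enc_def BB_def)
qed

lemma meas_encJ: "(\<lambda>p. restrict (enc p) J) \<in> MP \<rightarrow>\<^sub>M PiM J BB"
proof -
  have "(\<lambda>p. \<lambda>x\<in>J. enc p x) \<in> MP \<rightarrow>\<^sub>M PiM J BB"
    by (rule measurable_restrict) (rule meas_enc_comp)
  then show ?thesis by simp
qed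

lemma meas_dec_comp: "x \<in> I \<Longrightarrow> (\<lambda>f. of_discrete (f x)) \<in> PiM I BB \<rightarrow>\<^sub>M count_space UNIV"
  by (rule measurable_compose[OF measurable_component_singleton]) (auto simp: BB_def meas_disc)

lemma meas_dec: "dec \<in> PiM UNIV BB \<rightarrow>\<^sub>M MP"
proof -
  have 1: "(\<lambda>f. \<lambda>j. of_discrete (f (Inl j))) \<in> PiM UNIV BB \<rightarrow>\<^sub>M MZ"
    unfolding MZ_def by (rule measurable_PiM_single') (auto simp: space_PiM intro: meas_dec_comp)
  have 2: "(\<lambda>f. \<lambda>i. of_discrete (f (Inr i))) \<in> PiM UNIV BB \<rightarrow>\<^sub>M MN"
    unfolding MN_def by (rule measurable_PiM_single') (auto simp: space_PiM intro: meas_dec_comp)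
  show ?thesis unfolding dec_def using measurable_Pair[OF 1 2] .
qed

lemma finite_Inr: "finite J \<Longrightarrow> finite (Inr -` J :: nat set)"
  by (rule finite_vimageI) auto

lemma KK_bound: "finite J \<Longrightarrow> Inr i \<in> J \<Longrightarrow> i < KK J"
  unfolding KK_def by (rule Suc_le_lessD, rule Max_ge) (auto simp: finite_Inr)

lemma KK_mono: "J \<subseteq> H \<Longrightarrow> finite H \<Longrightarrow> KK J \<le> KK H"
  unfolding KK_def by (rule Max_mono) (auto simp: finite_Inr)

lemma enc_trunc: "finite J \<Longrightarrow> restrict (enc (trunc (KK J) p)) J = restrict (enc p) J"
  by (auto simp: fun_eq_iff enc_def trunc_def KK_bound split: sum.splits)

context cons begin

lemma R_cons0: "distr (R k) MP (trunc k) = R k"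
proof (rule measure_eqI)
  show "sets (distr (R k) MP (trunc k)) = sets (R k)" by simp
  fix X assume "X \<in> sets (distr (R k) MP (trunc k))"
  then have X: "X \<in> sets MP" by simp
  have mt: "trunc k \<in> R k \<rightarrow>\<^sub>M MP"
    by (subst measurable_cong_sets[OF sets_R refl]) (rule meas_trunc)
  have tX: "trunc k -` X \<inter> UNIV \<in> sets MP" using measurable_sets[OF meas_trunc X] by (simp add: space_MP)
  have "emeasure (distr (R k) MP (trunc k)) X = emeasure (R k) (trunc k -` X \<inter> UNIV)"
    using emeasure_distr[OF mt X] by simp
  also have "\<dots> = (\<Sum>r<2^k. (1/2^k) * emeasure (ths k) ((\<lambda>w. (T r w, bits r)) -` (trunc k -` X \<inter> UNIV)))"
    by (rule emeasure_R[OF tX])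
  also have "\<dots> = (\<Sum>r<2^k. (1/2^k) * emeasure (ths k) ((\<lambda>w. (T r w, bits r)) -` X))"
    by (intro sum.cong refl arg_cong2[where f="(*)"] arg_cong2[where f=emeasure]) (auto simp: trunc_bits)
  also have "\<dots> = emeasure (R k) X" using emeasure_R[OF X] by simp
  finally show "emeasure (distr (R k) MP (trunc k)) X = emeasure (R k) X" .
qed

lemma R_cons: "k \<le> k' \<Longrightarrow> distr (R k') MP (trunc k) = R k"
proof (induction k' rule: dec_induct)
  case base then show ?case by (rule R_cons0)
next
  case (step k')
  have mt: "trunc k' \<in> R (Suc k') \<rightarrow>\<^sub>M MP"
    by (subst measurable_cong_sets[OF sets_R refl]) (rule meas_trunc)
  have "distr (R (Suc k')) MP (trunc k) = distr (R (Suc k')) MP (trunc k \<circ> trunc k')"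
    using step(1) by (simp add: comp_def trunc_trunc)
  also have "\<dots> = distr (distr (R (Suc k')) MP (trunc k')) MP (trunc k)"
    by (rule distr_distr[OF meas_trunc mt, symmetric])
  also have "\<dots> = R k" using R_step[of k'] step(3) by simp
  finally show ?case .
qed

definition PJ :: "(int + nat) set \<Rightarrow> (int + nat \<Rightarrow> bool discrete) measure" where
  "PJ J = distr (R (KK J)) (PiM J BB) (\<lambda>p. restrict (enc p) J)"

lemma mencR: "(\<lambda>p. restrict (enc p) J) \<in> R k \<rightarrow>\<^sub>M PiM J BB"
  by (subst measurable_cong_sets[OF sets_R refl]) (rule meas_encJ)

lemma PJ_proj:
  assumes JH: "J \<subseteq> H" and H: "finite H"
  shows "PJ J = distr (PJ H) (PiM J BB) (\<lambda>f. restrict f J)"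
proof -
  have J: "finite J" using JH H by (rule finite_subset)
  have mt: "trunc (KK J) \<in> R (KK H) \<rightarrow>\<^sub>M MP"
    by (subst measurable_cong_sets[OF sets_R refl]) (rule meas_trunc)
  have "PJ J = distr (distr (R (KK H)) MP (trunc (KK J))) (PiM J BB) (\<lambda>p. restrict (enc p) J)"
    unfolding PJ_def using R_cons[OF KK_mono[OF JH H]] by simp
  also have "\<dots> = distr (R (KK H)) (PiM J BB) ((\<lambda>p. restrict (enc p) J) \<circ> trunc (KK J))"
    by (rule distr_distr[OF meas_encJ mt])
  also have "(\<lambda>p. restrict (enc p) J) \<circ> trunc (KK J) = (\<lambda>f. restrict f J) \<circ> (\<lambda>p. restrict (enc p) H)"
  proof (rule ext)
    fix p
    show "((\<lambda>p. restrict (enc p) J) \<circ> trunc (KK J)) p = ((\<lambda>f. restrict f J) \<circ> (\<lambda>p. restrict (enc p) H)) p"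
      using enc_trunc[OF J, of p] Int_absorb1[OF JH] by simp
  qed
  also have "distr (R (KK H)) (PiM J BB) \<dots> = distr (PJ H) (PiM J BB) (\<lambda>f. restrict f J)"
    unfolding PJ_def by (rule distr_distr[OF measurable_restrict_subset[OF JH] mencR, symmetric])
  finally show ?thesis .
qed

lemma PJ_prob: "prob_space (PJ J)"
proof -
  interpret prob_space "R (KK J)" by (rule R_prob)
  show ?thesis unfolding PJ_def by (rule prob_space_distr[OF mencR])
qed

lemma proj: "polish_projective UNIV PJ"
proof -
  have "projective_family UNIV PJ BB"
    apply (rule projective_family.intro)
     apply (erule PJ_proj, assumption)
    apply (rule PJ_prob)
    done
  then show ?thesis unfolding polish_projective_def BB_def .
qed

end


lemma prod_alg_sets: "E \<in> prod_algebra UNIV (\<lambda>_::int. count_space (UNIV::bool set)) \<Longrightarrow> E \<in> sets MZ"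
  unfolding MZ_def sets_PiM by (rule sigma_sets.Basic)

lemma sets_MZ_alg: "sets MZ = sigma_sets UNIV (prod_algebra UNIV (\<lambda>_::int. count_space (UNIV::bool set)))"
  unfolding MZ_def sets_PiM by (simp add: PiE_UNIV_domain)

lemma UNIV_prod_alg: "UNIV \<in> prod_algebra UNIV (\<lambda>_::int. count_space (UNIV::bool set))"
  using space_in_prod_algebra[of UNIV "\<lambda>_::int. count_space (UNIV::bool set)"] by (simp add: PiE_UNIV_domain)

definition ext :: "(int + nat) set \<Rightarrow> (int + nat \<Rightarrow> bool discrete) \<Rightarrow> (int + nat \<Rightarrow> bool discrete)" where
  "ext J y = (\<lambda>x. if x \<in> J then y x else discrete False)"

lemma meas_ext_comp:
  "(\<lambda>y. of_discrete (ext J y x)) \<in> PiM J BB \<rightarrow>\<^sub>M count_space UNIV"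
proof (cases "x \<in> J")
  case True then show ?thesis using meas_dec_comp[OF True] by (simp add: ext_def)
next
  case False then show ?thesis by (simp add: ext_def)
qed

lemma meas_dec_ext: "(\<lambda>y. dec (ext J y)) \<in> PiM J BB \<rightarrow>\<^sub>M MP"
proof -
  have 1: "(\<lambda>y. \<lambda>j. of_discrete (ext J y (Inl j))) \<in> PiM J BB \<rightarrow>\<^sub>M MZ"
    unfolding MZ_def apply (rule measurable_PiM_single') apply (rule meas_ext_comp) by (simp add: space_PiM)
  have 2: "(\<lambda>y. \<lambda>i. of_discrete (ext J y (Inr i))) \<in> PiM J BB \<rightarrow>\<^sub>M MN"
    unfolding MN_def apply (rule measurable_PiM_single') apply (rule meas_ext_comp) by (simp add: space_PiM)
  show ?thesis unfolding dec_def using measurable_Pair[OF 1 2] .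
qed

lemma KK_J: "KK (Inl ` F \<union> Inr ` {..<k}) = k"
proof -
  have e: "Inr -` (Inl ` F \<union> Inr ` {..<k}) = {..<k}" by auto
  show ?thesis unfolding KK_def e
    by (rule Max_eqI) (auto, metis gr0_implies_Suc image_eqI lessThan_iff lessI neq0_conv)
qed

lemma memE:
  assumes "E = prod_emb UNIV (\<lambda>_::int. count_space (UNIV::bool set)) F (PiE F X)"
  shows "w \<in> E \<longleftrightarrow> (\<forall>j\<in>F. w j \<in> X j)"
  using assms by (auto simp: prod_emb_iff PiE_iff)

context cons begin

abbreviation "LLim \<equiv> projective_family.lim UNIV PJ (\<lambda>_. borel)"

definition nuC where "nuC = distr LLim MP dec"

lemma PL: "polish_projective UNIV PJ" by (rule proj)

lemma sets_LIM: "sets LLim = sets (PiM UNIV BB)"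
proof -
  interpret PL: polish_projective UNIV PJ by (rule PL)
  show ?thesis unfolding BB_def by (rule PL.sets_lim)
qed

lemma space_LIM: "space LLim = UNIV"
  using sets_eq_imp_space_eq[OF sets_LIM] by (simp add: space_PiM PiE_UNIV_domain)

lemma mdec: "dec \<in> LLim \<rightarrow>\<^sub>M MP"
  by (subst measurable_cong_sets[OF sets_LIM refl]) (rule meas_dec)

lemma sets_nuC[simp]: "sets nuC = sets MP"
  by (simp add: nuC_def)

lemma space_nuC[simp]: "space nuC = UNIV"
  using sets_eq_imp_space_eq[OF sets_nuC] by (simp add: space_MP)

lemma prob_nuC: "prob_space nuC"
proof -
  interpret PL: polish_projective UNIV PJ by (rule PL)
  show ?thesis unfolding nuC_def by (rule PL.P.prob_space_distr[OF mdec])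
qed

lemma E_cyl:
  assumes E: "E \<in> prod_algebra UNIV (\<lambda>_::int. count_space (UNIV::bool set))"
  shows "emeasure nuC (E \<times> Acyl r k) = emeasure (R k) (E \<times> Acyl r k)"
proof -
  interpret PL: polish_projective UNIV PJ by (rule PL)
  obtain F X where EF: "E = prod_emb UNIV (\<lambda>_::int. count_space (UNIV::bool set)) F (PiE F X)" and F: "finite F"
    using prod_algebraE[OF E] by metis
  define J where "J = Inl ` F \<union> Inr ` {..<k}"
  have J: "finite J" using F unfolding J_def by simp
  have KJ: "KK J = k" unfolding J_def by (rule KK_J)
  have Es: "E \<times> Acyl r k \<in> sets MP" using prod_alg_sets[OF E] by simp
  have key: "dec (ext J (restrict f J)) \<in> E \<times> Acyl r k \<longleftrightarrow> dec f \<in> E \<times> Acyl r k" for f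
  proof -
    have a: "fst (dec (ext J (restrict f J))) \<in> E \<longleftrightarrow> fst (dec f) \<in> E"
      unfolding memE[OF EF] by (auto simp: dec_def ext_def J_def)
    have b: "code k (snd (dec (ext J (restrict f J)))) = code k (snd (dec f))"
      by (rule code_cong) (auto simp: dec_def ext_def J_def)
    show ?thesis using a b by (cases "dec (ext J (restrict f J))", cases "dec f") (auto simp: Acyl_code)
  qed
  define Y where "Y = {y \<in> space (PiM J BB). dec (ext J y) \<in> E \<times> Acyl r k}"
  have Y: "Y \<in> sets (PiM J BB)"
  proof -
    have "Y = (\<lambda>y. dec (ext J y)) -` (E \<times> Acyl r k) \<inter> space (PiM J BB)" unfolding Y_def by auto
    also have "\<dots> \<in> sets (PiM J BB)" by (rule measurable_sets[OF meas_dec_ext Es])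
    finally show ?thesis .
  qed
  have emb: "prod_emb UNIV BB J Y = dec -` (E \<times> Acyl r k) \<inter> space LLim"
    unfolding Y_def space_LIM using key by (auto simp: prod_emb_iff space_PiM)
  have "emeasure nuC (E \<times> Acyl r k) = emeasure LLim (dec -` (E \<times> Acyl r k) \<inter> space LLim)"
    unfolding nuC_def by (rule emeasure_distr[OF mdec Es])
  also have "\<dots> = emeasure LLim (prod_emb UNIV BB J Y)" by (simp add: emb)
  also have "\<dots> = emeasure (PJ J) Y"
    using PL.emeasure_lim_emb[of J Y] J Y by (simp add: BB_def)
  also have "\<dots> = emeasure (R (KK J)) ((\<lambda>p. restrict (enc p) J) -` Y \<inter> space (R (KK J)))"
    unfolding PJ_def by (rule emeasure_distr[OF mencR Y])
  also have "(\<lambda>p. restrict (enc p) J) -` Y \<inter> space (R (KK J)) = E \<times> Acyl r k"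
    unfolding Y_def using key[of "enc _"] by (auto simp: space_PiM)
  finally show ?thesis by (simp add: KJ)
qed

lemma R_rect:
  assumes r: "r < 2^k" and C: "C \<in> sets MZ"
  shows "emeasure (R k) (C \<times> Acyl r k) = (1/2^k) * emeasure (ths k) (T r -` C)"
proof -
  have "emeasure (R k) (C \<times> Acyl r k) = (\<Sum>r'<2^k. (1/2^k) * emeasure (ths k) ((\<lambda>w. (T r' w, bits r')) -` (C \<times> Acyl r k)))"
    using C by (intro emeasure_R) simp
  also have "\<dots> = (\<Sum>r'<2^k. if r' = r then (1/2^k) * emeasure (ths k) (T r -` C) else 0)"
  proof (rule sum.cong[OF refl])
    fix r' assume "r' \<in> {..<(2::nat)^k}"
    then have r': "r' < 2^k" by simp
    have "bits r' \<in> Acyl r k \<longleftrightarrow> r' = r" using r' by (simp add: Acyl_code code_bits)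
    then have "(\<lambda>w. (T r' w, bits r')) -` (C \<times> Acyl r k) = (if r' = r then T r -` C else {})" by auto
    then show "(1/2^k) * emeasure (ths k) ((\<lambda>w. (T r' w, bits r')) -` (C \<times> Acyl r k)) =
        (if r' = r then (1/2^k) * emeasure (ths k) (T r -` C) else 0)"
      by simp
  qed
  also have "\<dots> = (1/2^k) * emeasure (ths k) (T r -` C)" using r by (simp add: sum.delta)
  finally show ?thesis .
qed

lemma E_all:
  assumes r: "r < 2^k" and C: "C \<in> sets MZ"
  shows "emeasure nuC (C \<times> Acyl r k) = (1/2^k) * emeasure (ths k) (T r -` C)"
proof -
  interpret prob_space nuC by (rule prob_nuC)
  define \<mu>1 where "\<mu>1 = distr (density nuC (indicator (UNIV \<times> Acyl r k))) MZ fst"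
  define \<mu>2 where "\<mu>2 = scale_measure (1/2^k) (shift_pow r (ths k))"
  have e1: "emeasure \<mu>1 D = emeasure nuC (D \<times> Acyl r k)" if "D \<in> sets MZ" for D
    unfolding \<mu>1_def by (rule Dlem[OF sets_nuC Acyl_sets that])
  have e2: "emeasure \<mu>2 D = (1/2^k) * emeasure (ths k) (T r -` D)" if "D \<in> sets MZ" for D
    unfolding \<mu>2_def using emeasure_shift_pow[OF hsets that] by simp
  have "\<mu>1 = \<mu>2"
  proof (rule measure_eqI_generator_eq[OF Int_stable_prod_algebra, where \<Omega>=UNIV and A="\<lambda>_. UNIV"])
    show "prod_algebra UNIV (\<lambda>_::int. count_space (UNIV::bool set)) \<subseteq> Pow UNIV" by simp
    fix X assume X: "X \<in> prod_algebra UNIV (\<lambda>_::int. count_space (UNIV::bool set))"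
    show "emeasure \<mu>1 X = emeasure \<mu>2 X"
      using e1[OF prod_alg_sets[OF X]] e2[OF prod_alg_sets[OF X]] E_cyl[OF X, of r k] R_rect[OF r prod_alg_sets[OF X]]
      by simp
  next
    show "sets \<mu>1 = sigma_sets UNIV (prod_algebra UNIV (\<lambda>_::int. count_space (UNIV::bool set)))"
      unfolding \<mu>1_def sets_MZ_alg[symmetric] by simp
    show "sets \<mu>2 = sigma_sets UNIV (prod_algebra UNIV (\<lambda>_::int. count_space (UNIV::bool set)))"
      unfolding \<mu>2_def sets_MZ_alg[symmetric] by simp
    show "range (\<lambda>_. UNIV) \<subseteq> prod_algebra UNIV (\<lambda>_::int. count_space (UNIV::bool set))"
      using UNIV_prod_alg by auto
    show "(\<Union>i::nat. UNIV) = UNIV" by simp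
    show "\<And>i::nat. emeasure \<mu>1 UNIV \<noteq> \<infinity>"
      using e1[OF UNIV_sets_MZ] emeasure_finite by simp
  qed
  then show ?thesis using e1[OF C] e2[OF C] by simp
qed

lemma nuC_Minv: "nuC \<in> Minv"
proof -
  interpret prob_space nuC by (rule prob_nuC)
  have mSO: "SO \<in> nuC \<rightarrow>\<^sub>M MP" by (subst measurable_cong_sets[OF sets_nuC refl]) (rule meas_SO)
  have "distr nuC MP SO = nuC"
  proof (rule determined)
    show "sets (distr nuC MP SO) = sets MP" by simp
    show "sets nuC = sets MP" by simp
    show "emeasure (distr nuC MP SO) UNIV \<noteq> \<infinity>"
      using emeasure_distr[OF mSO UNIV_sets_MP] emeasure_finite by simp
    fix C r k assume C: "C \<in> sets MZ"
    show "emeasure (distr nuC MP SO) (C \<times> Acyl r k) = emeasure nuC (C \<times> Acyl r k)"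
    proof (cases "r < 2^k")
      case True
      have sC: "shift -` C \<in> sets MZ" using measurable_sets[OF meas_shift C] by simp
      have "emeasure (distr nuC MP SO) (C \<times> Acyl r k) = emeasure nuC (SO -` (C \<times> Acyl r k) \<inter> space nuC)"
        by (rule emeasure_distr[OF mSO sets_rect[OF C]])
      also have "\<dots> = emeasure nuC (shift -` C \<times> Acyl (pr k r) k)"
        using pre_SO[OF True, of C] by (simp add: space_MP)
      also have "\<dots> = (1/2^k) * emeasure (ths k) (T (pr k r) -` (shift -` C))"
        by (rule E_all[OF pr_lt[OF True] sC])
      also have "emeasure (ths k) (T (pr k r) -` (shift -` C)) = emeasure (ths k) (T r -` C)"
      proof (cases "r = 0")
        case True
        have TS: "\<And>n. T n -` (shift -` C) = T (Suc n) -` C" by auto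
        have p: "pr k r = 2^k - 1" using True by (simp add: pr_def)
        have e: "Suc (2^k - 1) = (2::nat)^k" by simp
        have "T (pr k r) -` (shift -` C) = T (2^k) -` C" unfolding p TS e ..
        then have "emeasure (ths k) (T (pr k r) -` (shift -` C)) = emeasure (shift_pow (2^k) (ths k)) C"
          using emeasure_shift_pow[OF hsets C] by simp
        also have "\<dots> = emeasure (ths k) C" using hS[of k] by simp
        finally show ?thesis using True by simp
      next
        case False
        have TS: "\<And>n. T n -` (shift -` C) = T (Suc n) -` C" by auto
        have p: "pr k r = r - 1" using False by (simp add: pr_def)
        have e: "Suc (r - 1) = r" using False by simp
        have "T (pr k r) -` (shift -` C) = T r -` C" unfolding p TS e ..
        then show ?thesis by simp
      qed
      also have "(1/2^k) * emeasure (ths k) (T r -` C) = emeasure nuC (C \<times> Acyl r k)"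
        by (rule E_all[OF True C, symmetric])
      finally show ?thesis .
    next
      case False then show ?thesis using Acyl_empty[of k r] by simp
    qed
  qed
  then show ?thesis unfolding Minv_def using prob_nuC by simp
qed

lemma theta_nuC: "theta k nuC = ths k"
proof (rule measure_eqI)
  show "sets (theta k nuC) = sets (ths k)" using hsets by simp
  fix C assume "C \<in> sets (theta k nuC)"
  then have C: "C \<in> sets MZ" by simp
  interpret th: prob_space "ths k" by (rule hP)
  have u: "emeasure nuC (UNIV \<times> Acyl 0 k) = 1/2^k"
    using E_all[of 0 k UNIV] UNIV_sets_MZ th.emeasure_space_1 hspace by simp
  have i: "1 / ((1::ennreal)/2^k) = 2^k" by (rule inv1[OF pow2_inv])
  have "emeasure (theta k nuC) C = (1 / emeasure nuC (UNIV \<times> Acyl 0 k)) * emeasure nuC (C \<times> Acyl 0 k)"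
    unfolding theta_def by (rule emeasure_Pproj[OF sets_nuC C])
  also have "\<dots> = 2^k * ((1/2^k) * emeasure (ths k) C)" using u i E_all[of 0 k C] C by simp
  also have "\<dots> = emeasure (ths k) C" using pow2_inv[of k] by (simp add: mult.assoc[symmetric])
  finally show "emeasure (theta k nuC) C = emeasure (ths k) C" .
qed

end


theorem corollary1:
  shows
   "(\<forall>\<nu>\<in>Minv. \<forall>k.
        shift_pow (2 ^ k) (theta k \<nu>) = theta k \<nu> \<and>
        (\<forall>B\<in>sets MZ. emeasure (theta k \<nu>) B =
            (emeasure (theta (Suc k) \<nu>) B
             + emeasure (shift_pow (2 ^ k) (theta (Suc k) \<nu>)) B) / 2))
    \<and> (\<forall>\<nu>\<in>Minv. \<forall>\<nu>'\<in>Minv. (\<forall>k. theta k \<nu> = theta k \<nu>') \<longrightarrow>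
          (\<forall>r k. Pproj r k \<nu> = Pproj r k \<nu>') \<and> \<nu> = \<nu>')
    \<and> (\<forall>\<theta>s :: nat \<Rightarrow> (int \<Rightarrow> bool) measure.
          (\<forall>k. prob_space (\<theta>s k) \<and> sets (\<theta>s k) = sets MZ) \<longrightarrow>
          (\<forall>k. shift_pow (2 ^ k) (\<theta>s k) = \<theta>s k \<and>
               (\<forall>B\<in>sets MZ. emeasure (\<theta>s k) B =
                  (emeasure (\<theta>s (Suc k)) B
                   + emeasure (shift_pow (2 ^ k) (\<theta>s (Suc k))) B) / 2)) \<longrightarrow>
          (\<exists>!\<nu>. \<nu> \<in> Minv \<and> (\<forall>k. theta k \<nu> = \<theta>s k)))"
proof (intro conjI)
  show "\<forall>\<nu>\<in>Minv. \<forall>k.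
        shift_pow (2 ^ k) (theta k \<nu>) = theta k \<nu> \<and>
        (\<forall>B\<in>sets MZ. emeasure (theta k \<nu>) B =
            (emeasure (theta (Suc k) \<nu>) B
             + emeasure (shift_pow (2 ^ k) (theta (Suc k) \<nu>)) B) / 2)"
    using part1a part1b by blast
  show "\<forall>\<nu>\<in>Minv. \<forall>\<nu>'\<in>Minv. (\<forall>k. theta k \<nu> = theta k \<nu>') \<longrightarrow>
          (\<forall>r k. Pproj r k \<nu> = Pproj r k \<nu>') \<and> \<nu> = \<nu>'"
  proof (intro ballI impI)
    fix \<nu> \<nu>' assume "\<nu> \<in> Minv" "\<nu>' \<in> Minv" "\<forall>k. theta k \<nu> = theta k \<nu>'"
    then have "\<nu> = \<nu>'" using part2 by blast
    then show "(\<forall>r k. Pproj r k \<nu> = Pproj r k \<nu>') \<and> \<nu> = \<nu>'" by simp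
  qed
  show "\<forall>\<theta>s :: nat \<Rightarrow> (int \<Rightarrow> bool) measure.
          (\<forall>k. prob_space (\<theta>s k) \<and> sets (\<theta>s k) = sets MZ) \<longrightarrow>
          (\<forall>k. shift_pow (2 ^ k) (\<theta>s k) = \<theta>s k \<and>
               (\<forall>B\<in>sets MZ. emeasure (\<theta>s k) B =
                  (emeasure (\<theta>s (Suc k)) B
                   + emeasure (shift_pow (2 ^ k) (\<theta>s (Suc k))) B) / 2)) \<longrightarrow>
          (\<exists>!\<nu>. \<nu> \<in> Minv \<and> (\<forall>k. theta k \<nu> = \<theta>s k))"
  proof (intro allI impI)
    fix \<theta>s :: "nat \<Rightarrow> (int \<Rightarrow> bool) measure"
    assume h1: "\<forall>k. prob_space (\<theta>s k) \<and> sets (\<theta>s k) = sets MZ"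
      and h2: "\<forall>k. shift_pow (2 ^ k) (\<theta>s k) = \<theta>s k \<and>
               (\<forall>B\<in>sets MZ. emeasure (\<theta>s k) B =
                  (emeasure (\<theta>s (Suc k)) B
                   + emeasure (shift_pow (2 ^ k) (\<theta>s (Suc k))) B) / 2)"
    have c: "cons \<theta>s"
      by (rule cons.intro) (use h1 h2 in blast)+
    interpret cons \<theta>s by (rule c)
    show "\<exists>!\<nu>. \<nu> \<in> Minv \<and> (\<forall>k. theta k \<nu> = \<theta>s k)"
    proof (rule ex1I[of _ nuC])
      show "nuC \<in> Minv \<and> (\<forall>k. theta k nuC = \<theta>s k)" using nuC_Minv theta_nuC by blast
      fix \<nu> assume "\<nu> \<in> Minv \<and> (\<forall>k. theta k \<nu> = \<theta>s k)"
      then show "\<nu> = nuC" using part2[OF _ nuC_Minv] theta_nuC by auto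
    qed
  qed
qed


end
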